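(* Let $\boldsymbol{\gamma}\ge 0$ be an uplink SINR vector such that $\mathbf{I}-\mathbf{F}(\boldsymbol{\gamma})$ and $\mathbf{I}-\mathbf{H}(\boldsymbol{\gamma})$ are invertible. Then $\boldsymbol{\gamma}$ is feasible, i.e. $0\le p_i(\boldsymbol{\gamma})\le p_i^{\max}$ for all $i\in\mathcal{M}$, if and only if $$0\le \Phi_m(\boldsymbol{\gamma})\le \Phi^{\max}_m(\boldsymbol{\gamma})\quad\text{for all } m\in\mathcal{B},$$ where $\boldsymbol{\Phi}(\boldsymbol{\gamma})=(\mathbf{I}-\mathbf{H}(\boldsymbol{\gamma}))^{-1}\mathbf{N}$ and $\Phi^{\max}_m(\boldsymbol{\gamma})=\min_{i\in\mathcal{M}^{\mathcal{B}}_m}\frac{p_i^{\max}h_{m,i}(\gamma_i+1)}{\gamma_i}$ (terms with $\gamma_i=0$, and the minimum over an empty set, being interpreted as $+\infty$).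
   Context: Uplink cellular model: users $\mathcal{M}=\{1,\dots,M\}$, BSs $\mathcal{B}=\{1,\dots,B\}$; user $i$ served by BS $b_i$, $\mathcal{M}^{\mathcal{B}}_m=\{i:b_i=m\}$. Uplink path gains $h_{m,i}>0$ (user $i$ to BS $m$), noise $N_m>0$ at BS $m$, maximum user powers $p_i^{\max}>0$. $\mathbf{p}(\boldsymbol{\gamma})=(\mathbf{I}-\mathbf{F}(\boldsymbol{\gamma}))^{-1}\mathbf{U}(\boldsymbol{\gamma})$ is the power vector achieving SINR vector $\boldsymbol{\gamma}$, where $U_i=\gamma_iN_{b_i}/h_{b_i,i}$, $F_{ii}=0$, $F_{ij}=\gamma_ih_{b_i,j}/h_{b_i,i}$ ($i\neq j$). With $\theta_i=\gamma_i/(\gamma_i+1)$, the $B\times B$ matrix $\mathbf{H}(\boldsymbol{\gamma})$ has $H_{mm}=\sum_{i\in\mathcal{M}^{\mathcal{B}}_m}\theta_i$ and $H_{mn}=\sum_{i\in\mathcal{M}^{\mathcal{B}}_n}\frac{h_{m,i}}{h_{n,i}}\theta_i$ for $m\ne n$; $\mathbf{N}=(N_1,\dots,N_B)^{\mathrm T}$. *)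

theory Defs
  imports "HOL-Analysis.Analysis"
begin

(* Users are indexed by a finite type 'u, base stations by a finite type 'b.
   bs i = b_i (serving BS of user i), h m i = h_{m,i} (gain user i -> BS m),
   N m = noise at BS m, pmax i = maximal power of user i. *)

definition Umat :: "('u::finite \<Rightarrow> 'b::finite) \<Rightarrow> ('b \<Rightarrow> 'u \<Rightarrow> real) \<Rightarrow> ('b \<Rightarrow> real)
    \<Rightarrow> real^'u \<Rightarrow> real^'u" where
  "Umat bs h N \<gamma> = (\<chi> i. \<gamma>$i * N (bs i) / h (bs i) i)"

definition Fmat :: "('u::finite \<Rightarrow> 'b::finite) \<Rightarrow> ('b \<Rightarrow> 'u \<Rightarrow> real)
    \<Rightarrow> real^'u \<Rightarrow> real^'u^'u" where
  "Fmat bs h \<gamma> = (\<chi> i j. if i = j then 0 else \<gamma>$i * h (bs i) j / h (bs i) i)"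

definition pvec :: "('u::finite \<Rightarrow> 'b::finite) \<Rightarrow> ('b \<Rightarrow> 'u \<Rightarrow> real) \<Rightarrow> ('b \<Rightarrow> real)
    \<Rightarrow> real^'u \<Rightarrow> real^'u" where
  "pvec bs h N \<gamma> = matrix_inv (mat 1 - Fmat bs h \<gamma>) *v Umat bs h N \<gamma>"

definition theta :: "real^'u::finite \<Rightarrow> 'u \<Rightarrow> real" where
  "theta \<gamma> i = \<gamma>$i / (\<gamma>$i + 1)"

definition Hmat :: "('u::finite \<Rightarrow> 'b::finite) \<Rightarrow> ('b \<Rightarrow> 'u \<Rightarrow> real)
    \<Rightarrow> real^'u \<Rightarrow> real^'b^'b" where
  "Hmat bs h \<gamma> = (\<chi> m n. if m = n then (\<Sum>i\<in>{i. bs i = m}. theta \<gamma> i)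
                      else (\<Sum>i\<in>{i. bs i = n}. h m i / h n i * theta \<gamma> i))"

definition Nvec :: "('b::finite \<Rightarrow> real) \<Rightarrow> real^'b" where
  "Nvec N = (\<chi> m. N m)"

definition Phi :: "('u::finite \<Rightarrow> 'b::finite) \<Rightarrow> ('b \<Rightarrow> 'u \<Rightarrow> real) \<Rightarrow> ('b \<Rightarrow> real)
    \<Rightarrow> real^'u \<Rightarrow> real^'b" where
  "Phi bs h N \<gamma> = matrix_inv (mat 1 - Hmat bs h \<gamma>) *v Nvec N"

(* Phi^max_m as an extended real: terms with gamma_i = 0 count as +infinity,
   and the infimum over an empty set is +infinity. *)
definition Phi_max :: "('u::finite \<Rightarrow> 'b::finite) \<Rightarrow> ('b \<Rightarrow> 'u \<Rightarrow> real) \<Rightarrow> ('u \<Rightarrow> real)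
    \<Rightarrow> real^'u \<Rightarrow> 'b \<Rightarrow> ereal" where
  "Phi_max bs h pmax \<gamma> m = (INF i\<in>{i. bs i = m}.
      (if \<gamma>$i = 0 then \<infinity> else ereal (pmax i * h m i * (\<gamma>$i + 1) / \<gamma>$i)))"

end

theory Submission
  imports Defs
begin

lemma minv:
  fixes A :: "real^'n^'n"
  assumes "invertible A"
  shows "A ** matrix_inv A = mat 1 \<and> matrix_inv A ** A = mat 1"
  using assms unfolding invertible_def matrix_inv_def by (rule someI_ex)

lemma solve_eq:
  fixes A :: "real^'n^'n"
  assumes "invertible A" "A *v x = b"
  shows "matrix_inv A *v b = x"
  using minv[OF assms(1)] assms(2)
  by (metis matrix_vector_mul_assoc matrix_vector_mul_lid)

lemma inv_apply:
  fixes A :: "real^'n^'n"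
  assumes "invertible A"
  shows "A *v (matrix_inv A *v b) = b"
  using minv[OF assms(1)]
  by (metis matrix_vector_mul_assoc matrix_vector_mul_lid)

theorem corollary1:
  fixes bs :: "'u::finite \<Rightarrow> 'b::finite"
    and h :: "'b \<Rightarrow> 'u \<Rightarrow> real"
    and N :: "'b \<Rightarrow> real"
    and pmax :: "'u \<Rightarrow> real"
    and \<gamma> :: "real^'u"
  assumes h_pos: "\<And>m i. h m i > 0"
    and N_pos: "\<And>m. N m > 0"
    and pmax_pos: "\<And>i. pmax i > 0"
    and gamma_nonneg: "\<And>i. \<gamma>$i \<ge> 0"
    and invF: "invertible (mat 1 - Fmat bs h \<gamma>)"
    and invH: "invertible (mat 1 - Hmat bs h \<gamma>)"
  shows "(\<forall>i. 0 \<le> pvec bs h N \<gamma> $ i \<and> pvec bs h N \<gamma> $ i \<le> pmax i) \<longleftrightarrow>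
         (\<forall>m. 0 \<le> Phi bs h N \<gamma> $ m \<and> ereal (Phi bs h N \<gamma> $ m) \<le> Phi_max bs h pmax \<gamma> m)"
proof -
  define P where "P = pvec bs h N \<gamma>"
  define Q :: "real^'b" where "Q = (\<chi> m. N m + (\<Sum>j\<in>UNIV. h m j * P$j))"
  have PF: "(mat 1 - Fmat bs h \<gamma>) *v P = Umat bs h N \<gamma>"
    unfolding P_def pvec_def by (rule inv_apply[OF invF])
  have key: "h (bs i) i * P$i * (1 + \<gamma>$i) = \<gamma>$i * Q$(bs i)" for i
  proof -
    let ?c = "\<gamma>$i / h (bs i) i"
    have "((mat 1 - Fmat bs h \<gamma>) *v P)$i = (\<Sum>j\<in>UNIV. (mat 1 - Fmat bs h \<gamma>)$i$j * P$j)"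
      by (simp add: matrix_vector_mult_def)
    also have "\<dots> = (\<Sum>j\<in>UNIV. (if j = i then P$i else 0) - ?c * (h (bs i) j * P$j)
                     + (if j = i then ?c * (h (bs i) i * P$i) else 0))"
      by (rule sum.cong) (auto simp: Fmat_def mat_def)
    also have "\<dots> = P$i - ?c * (\<Sum>j\<in>UNIV. h (bs i) j * P$j) + ?c * (h (bs i) i * P$i)"
      by (simp add: sum.distrib sum_subtractf sum_distrib_left)
    finally have "P$i - ?c * (\<Sum>j\<in>UNIV. h (bs i) j * P$j) + ?c * (h (bs i) i * P$i)
                  = \<gamma>$i * N (bs i) / h (bs i) i"
      using PF by (simp add: Umat_def)
    then have "h (bs i) i * P$i - \<gamma>$i * (\<Sum>j\<in>UNIV. h (bs i) j * P$j) + \<gamma>$i * (h (bs i) i * P$i)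
                  = \<gamma>$i * N (bs i)"
      using h_pos[of "bs i" i] by (simp add: field_simps)
    then show ?thesis by (simp add: Q_def algebra_simps)
  qed
  have Pform: "P$i = theta \<gamma> i * Q$(bs i) / h (bs i) i" for i
  proof -
    have "1 + \<gamma>$i > 0" using gamma_nonneg[of i] by simp
    moreover have "h (bs i) i * (1 + \<gamma>$i) > 0" using h_pos[of "bs i" i] \<open>1 + \<gamma>$i > 0\<close> by simp
    ultimately show ?thesis using key[of i]
      by (simp add: theta_def field_simps)
  qed
  have HQ: "(mat 1 - Hmat bs h \<gamma>) *v Q = Nvec N"
  proof -
    have Hc: "Hmat bs h \<gamma> $ m $ n = (\<Sum>i\<in>{i. bs i = n}. h m i / h n i * theta \<gamma> i)" for m n
    proof -
      have "\<And>i. h m i \<noteq> 0" using h_pos by (metis less_irrefl)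
      then show ?thesis by (auto simp: Hmat_def intro!: sum.cong)
    qed
    have "(Hmat bs h \<gamma> *v Q)$m = (\<Sum>j\<in>UNIV. h m j * P$j)" for m
    proof -
      have "(Hmat bs h \<gamma> *v Q)$m = (\<Sum>n\<in>UNIV. (\<Sum>i\<in>{i. bs i = n}. h m i / h n i * theta \<gamma> i) * Q$n)"
        by (simp add: matrix_vector_mult_def Hc)
      also have "\<dots> = (\<Sum>n\<in>UNIV. (\<Sum>i\<in>{i. i \<in> UNIV \<and> bs i = n}. h m i * P$i))"
      proof (rule sum.cong[OF refl])
        fix n
        show "(\<Sum>i\<in>{i. bs i = n}. h m i / h n i * theta \<gamma> i) * Q$n = (\<Sum>i\<in>{i. i \<in> UNIV \<and> bs i = n}. h m i * P$i)"
          unfolding sum_distrib_right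
          by (rule sum.cong) (auto simp: Pform)
      qed
      also have "\<dots> = (\<Sum>j\<in>UNIV. h m j * P$j)"
        by (rule sum.group) auto
      finally show ?thesis .
    qed
    then show ?thesis
      by (simp add: vec_eq_iff matrix_vector_mult_diff_rdistrib Nvec_def Q_def)
  qed
  have PhiQ: "Phi bs h N \<gamma> = Q"
    unfolding Phi_def by (rule solve_eq[OF invH HQ])
  show ?thesis
  proof
    assume A: "\<forall>i. 0 \<le> pvec bs h N \<gamma> $ i \<and> pvec bs h N \<gamma> $ i \<le> pmax i"
    show "\<forall>m. 0 \<le> Phi bs h N \<gamma> $ m \<and> ereal (Phi bs h N \<gamma> $ m) \<le> Phi_max bs h pmax \<gamma> m"
    proof (intro allI conjI)
      fix m
      have "0 \<le> (\<Sum>j\<in>UNIV. h m j * P$j)"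
        proof (rule sum_nonneg)
        fix j show "0 \<le> h m j * P$j" using A h_pos[of m j] by (simp add: P_def)
      qed
      then show "0 \<le> Phi bs h N \<gamma> $ m" using N_pos[of m] by (simp add: PhiQ Q_def)
      show "ereal (Phi bs h N \<gamma> $ m) \<le> Phi_max bs h pmax \<gamma> m"
        unfolding Phi_max_def
      proof (rule INF_greatest)
        fix i assume "i \<in> {i. bs i = m}"
        then have bi: "bs i = m" by simp
        show "ereal (Phi bs h N \<gamma> $ m) \<le> (if \<gamma>$i = 0 then \<infinity> else ereal (pmax i * h m i * (\<gamma>$i + 1) / \<gamma>$i))"
        proof (cases "\<gamma>$i = 0")
          case False
          then have g: "\<gamma>$i > 0" using gamma_nonneg[of i] by simp
          have "P$i \<le> pmax i" using A by (simp add: P_def)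
          then have "\<gamma>$i * Q$m \<le> h m i * pmax i * (1 + \<gamma>$i)"
            using key[of i] bi h_pos[of m i] g
            by (metis mult_right_mono mult_left_mono less_imp_le add_nonneg_nonneg zero_le_one)
          then have "Q$m \<le> pmax i * h m i * (\<gamma>$i + 1) / \<gamma>$i"
            using g by (simp add: field_simps)
          then show ?thesis using False by (simp add: PhiQ)
        qed simp
      qed
    qed
  next
    assume B: "\<forall>m. 0 \<le> Phi bs h N \<gamma> $ m \<and> ereal (Phi bs h N \<gamma> $ m) \<le> Phi_max bs h pmax \<gamma> m"
    show "\<forall>i. 0 \<le> pvec bs h N \<gamma> $ i \<and> pvec bs h N \<gamma> $ i \<le> pmax i"
    proof (intro allI conjI)
      fix i
      have Qn: "0 \<le> Q$(bs i)" using B PhiQ by auto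
      have th: "0 \<le> theta \<gamma> i" using gamma_nonneg[of i] by (simp add: theta_def)
      show "0 \<le> pvec bs h N \<gamma> $ i"
        unfolding P_def[symmetric] Pform using Qn th h_pos[of "bs i" i] by simp
      show "pvec bs h N \<gamma> $ i \<le> pmax i"
      proof (cases "\<gamma>$i = 0")
        case True
        then show ?thesis unfolding P_def[symmetric] Pform using pmax_pos[of i]
          by (simp add: theta_def less_imp_le)
      next
        case False
        then have g: "\<gamma>$i > 0" using gamma_nonneg[of i] by simp
        have "Phi_max bs h pmax \<gamma> (bs i) \<le> ereal (pmax i * h (bs i) i * (\<gamma>$i + 1) / \<gamma>$i)"
          unfolding Phi_max_def using False by (intro INF_lower2[of i]) auto
        then have "Q$(bs i) \<le> pmax i * h (bs i) i * (\<gamma>$i + 1) / \<gamma>$i"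
          using B PhiQ by (metis ereal_less_eq(3) order_trans)
        then have "\<gamma>$i * Q$(bs i) \<le> pmax i * h (bs i) i * (\<gamma>$i + 1)"
          using g by (simp add: field_simps)
        then have "h (bs i) i * P$i * (1 + \<gamma>$i) \<le> h (bs i) i * pmax i * (1 + \<gamma>$i)"
          using key[of i] by (simp add: algebra_simps)
        then have "P$i \<le> pmax i"
          using h_pos[of "bs i" i] g by (simp add: mult_le_cancel_right mult_le_cancel_left)
        then show ?thesis by (simp add: P_def)
      qed
    qed
  qed
qed

end
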